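(* Let $0<m<L$, $\alpha>0$, and $\rho \ge \rho_\mathrm{GD}:=\max(1-\alpha m,\ \alpha L-1)$. Let \[ M=\begin{bmatrix} -2Lm\, I & (L+m)I\\ (L+m)I & -2I\end{bmatrix}\in\mathbb{R}^{2n\times 2n}. \] Then $(I,-\alpha I, M)$ is $\rho$-hyperstable, i.e. there exists $c>0$ such that $|x(k)|\le c\rho^k|x(0)|$ for all $k\ge0$ whenever the sequences $x(k),u(k)\in\mathbb{R}^n$ satisfy $x(k+1)=x(k)-\alpha u(k)$ for all $k$ and \[ \sum_{k=0}^N\rho^{-2k}\langle L x(k)-u(k),\ u(k)-m x(k)\rangle\ \ge\ 0 \quad\text{for all } N\ge0. \]
   Context: Here $M$ is the sector-IQC matrix obtained from the general construction $M=\begin{bmatrix}-2LmC^*C&(L+m)C^*\\(L+m)C&-2I\end{bmatrix}$ with $C=I$; the quadratic constraint associated with $M$ is $2\sum_k\rho^{-2k}\langle Lx(k)-u(k),u(k)-mx(k)\rangle\ge0$. *)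

theory Defs
  imports "HOL-Analysis.Analysis"
begin

end

theory Submission
  imports Defs
begin

lemma scal:
  fixes m L alpha rho a b x u :: real
  assumes "a^2 = rho^2 - (1 - alpha*m)^2" "b^2 = rho^2 - (1 - alpha*L)^2"
  shows "((L-m)^2*alpha^2 + (a+b)^2) * ((L*x - u)*(u - m*x)) + (a*(L*x-u) - b*(u-m*x))^2
     = (L-m)^2 * (rho^2 * x^2 - (x - alpha*u)^2)"
  using assms by algebra

lemma vec_ineq:
  fixes m L alpha rho a b :: real and x u :: "real ^ 'n"
  assumes "a^2 = rho^2 - (1 - alpha*m)^2" "b^2 = rho^2 - (1 - alpha*L)^2"
  shows "((L-m)^2*alpha^2 + (a+b)^2) * ((L *\<^sub>R x - u) \<bullet> (u - m *\<^sub>R x))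
     \<le> (L-m)^2 * (rho^2 * (x \<bullet> x) - (x - alpha *\<^sub>R u) \<bullet> (x - alpha *\<^sub>R u))"
proof -
  have "\<And>i. ((L-m)^2*alpha^2 + (a+b)^2) * ((L * x$i - u$i)*(u$i - m*x$i))
     \<le> (L-m)^2 * (rho^2 * (x$i)^2 - (x$i - alpha*u$i)^2)"
    by (metis le_add_same_cancel1 zero_le_power2 scal[OF assms])
  hence "(\<Sum>i\<in>UNIV. ((L-m)^2*alpha^2 + (a+b)^2) * ((L * x$i - u$i)*(u$i - m*x$i)))
     \<le> (\<Sum>i\<in>UNIV. (L-m)^2 * (rho^2 * (x$i)^2 - (x$i - alpha*u$i)^2))"
    by (rule sum_mono)
  moreover have "(L-m)^2 * (rho^2 * (x \<bullet> x) - (x - alpha *\<^sub>R u) \<bullet> (x - alpha *\<^sub>R u))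
     = (\<Sum>i\<in>UNIV. (L-m)^2 * (rho^2 * (x$i)^2 - (x$i - alpha*u$i)^2))"
    by (simp add: inner_vec_def sum_distrib_left sum_subtractf power2_eq_square right_diff_distrib)
  moreover have "((L-m)^2*alpha^2 + (a+b)^2) * ((L *\<^sub>R x - u) \<bullet> (u - m *\<^sub>R x))
     = (\<Sum>i\<in>UNIV. ((L-m)^2*alpha^2 + (a+b)^2) * ((L * x$i - u$i)*(u$i - m*x$i)))"
    by (simp add: inner_vec_def sum_distrib_left)
  ultimately show ?thesis by simp
qed

theorem lemma2p8:
  fixes m L alpha rho :: real
  assumes "0 < m" and "m < L" and "0 < alpha"
    and "rho \<ge> max (1 - alpha * m) (alpha * L - 1)"
  shows "\<exists>c>0. \<forall>(x :: nat \<Rightarrow> real ^ 'n) (u :: nat \<Rightarrow> real ^ 'n).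
           (\<forall>k. x (Suc k) = x k - alpha *\<^sub>R u k) \<and>
           (\<forall>N. (\<Sum>k\<le>N. (L *\<^sub>R x k - u k) \<bullet> (u k - m *\<^sub>R x k) / rho ^ (2 * k)) \<ge> 0)
           \<longrightarrow> (\<forall>k. norm (x k) \<le> c * rho ^ k * norm (x 0))"
proof -
  have h1: "rho \<ge> 1 - alpha*m" "rho \<ge> alpha*L - 1" using assms(4) by auto
  have "alpha*m < alpha*L" using assms by simp
  hence rpos: "rho > 0" using h1 by linarith
  have p1: "rho^2 - (1 - alpha*m)^2 \<ge> 0"
  proof -
    have "\<bar>1 - alpha*m\<bar> \<le> rho" using h1 \<open>alpha*m < alpha*L\<close> by linarith
    thus ?thesis by (metis abs_ge_zero diff_ge_0_iff_ge power2_abs power_mono)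
  qed
  have p2: "rho^2 - (1 - alpha*L)^2 \<ge> 0"
  proof -
    have "\<bar>1 - alpha*L\<bar> \<le> rho" using h1 \<open>alpha*m < alpha*L\<close> by linarith
    thus ?thesis by (metis abs_ge_zero diff_ge_0_iff_ge power2_abs power_mono)
  qed
  define a where "a = sqrt (rho^2 - (1 - alpha*m)^2)"
  define b where "b = sqrt (rho^2 - (1 - alpha*L)^2)"
  have ha: "a^2 = rho^2 - (1 - alpha*m)^2" using p1 a_def by simp
  have hb: "b^2 = rho^2 - (1 - alpha*L)^2" using p2 b_def by simp
  define lam where "lam = ((L-m)^2*alpha^2 + (a+b)^2)"
  have lam0: "lam \<ge> 0" unfolding lam_def by simp
  have Lm: "(L-m)^2 > 0" using assms by simp
  define c' where "c' = lam / ((L-m)^2 * rho^2)"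
  have c'0: "c' \<ge> 0" unfolding c'_def using lam0 Lm by simp
  show ?thesis
  proof (intro exI[of _ 1] conjI allI impI)
    fix x u :: "nat \<Rightarrow> real ^ 'n" and k :: nat
    assume H: "(\<forall>k. x (Suc k) = x k - alpha *\<^sub>R u k) \<and>
           (\<forall>N. (\<Sum>k\<le>N. (L *\<^sub>R x k - u k) \<bullet> (u k - m *\<^sub>R x k) / rho ^ (2 * k)) \<ge> 0)"
    define q where "q k = (L *\<^sub>R x k - u k) \<bullet> (u k - m *\<^sub>R x k) / rho ^ (2 * k)" for k
    define V where "V k = (x k \<bullet> x k) / rho ^ (2*k)" for k
    have S0: "\<And>N. (\<Sum>k\<le>N. q k) \<ge> 0" using H unfolding q_def by blast
    have step: "V (Suc k) + c' * q k \<le> V k" for k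
    proof -
      have vi: "lam * ((L *\<^sub>R x k - u k) \<bullet> (u k - m *\<^sub>R x k))
        \<le> (L-m)^2 * (rho^2 * (x k \<bullet> x k) - x (Suc k) \<bullet> x (Suc k))"
        using vec_ineq[OF ha hb, of "x k" "u k"] H unfolding lam_def by simp
      have rk: "rho ^ (2 * Suc k) = rho^2 * rho^(2*k)" by (simp add: power_add power2_eq_square)
      have pk: "rho^(2*k) > 0" using rpos by simp
      have "c' * q k = lam * ((L *\<^sub>R x k - u k) \<bullet> (u k - m *\<^sub>R x k)) / ((L-m)^2 * rho^2 * rho^(2*k))"
        unfolding c'_def q_def by simp
      also have "\<dots> \<le> (L-m)^2 * (rho^2 * (x k \<bullet> x k) - x (Suc k) \<bullet> x (Suc k)) / ((L-m)^2 * rho^2 * rho^(2*k))"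
        using vi Lm rpos pk by (intro divide_right_mono) auto
      also have "\<dots> = V k - V (Suc k)"
        unfolding V_def rk
      proof -
        have g: "\<And>A R P X Y :: real. A > 0 \<Longrightarrow> R > 0 \<Longrightarrow> P > 0 \<Longrightarrow>
          A * (R * X - Y) / (A * R * P) = X / P - Y / (R * P)"
          by (simp add: field_simps)
        show "(L - m)\<^sup>2 * (rho\<^sup>2 * (x k \<bullet> x k) - x (Suc k) \<bullet> x (Suc k)) / ((L - m)\<^sup>2 * rho\<^sup>2 * rho ^ (2 * k)) =
          x k \<bullet> x k / rho ^ (2 * k) - x (Suc k) \<bullet> x (Suc k) / (rho\<^sup>2 * rho ^ (2 * k))"
          using Lm rpos pk by (intro g) auto
      qed
      finally show ?thesis by simp
    qed
    have ind: "V (Suc N) + c' * (\<Sum>k\<le>N. q k) \<le> V 0" for N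
    proof (induction N)
      case 0 then show ?case using step[of 0] by simp
    next
      case (Suc N)
      then show ?case using step[of "Suc N"] by (simp add: distrib_left)
    qed
    have Vk: "V k \<le> V 0"
    proof (cases k)
      case 0 then show ?thesis by simp
    next
      case (Suc N)
      then show ?thesis using ind[of N] S0[of N] c'0
        by (smt (verit) mult_nonneg_nonneg)
    qed
    have pk: "rho^(2*k) > 0" using rpos by simp
    have "norm (x k)^2 \<le> (rho^k * norm (x 0))^2"
    proof -
      have e1: "x k \<bullet> x k \<le> x 0 \<bullet> x 0 * rho^(2*k)"
        using Vk pk unfolding V_def by (simp add: divide_le_eq)
      have e2: "rho^(2*k) = (rho^k)^2" by (metis power_mult mult.commute)
      have e3: "(rho^k * norm (x 0))^2 = x 0 \<bullet> x 0 * rho^(2*k)"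
        unfolding e2 power_mult_distrib power2_norm_eq_inner by (rule mult.commute)
      show ?thesis unfolding e3 power2_norm_eq_inner using e1 .
    qed
    hence "norm (x k) \<le> rho^k * norm (x 0)"
      using rpos by (metis power2_le_imp_le norm_ge_zero zero_le_mult_iff zero_le_power less_imp_le)
    thus "norm (x k) \<le> 1 * rho ^ k * norm (x 0)" by simp
  qed simp
qed

end
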